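(* Let $p\in\mathbb{T}^{\mathcal{P}([n])}$ be a tropical Wick vector. Then $\mathcal{Q}(p^* )\subseteq\mathbb{T}^{\mathcal{J}}$ is the set of admissible vectors in $\mathcal{Q}(p)^\top$.
   Context: $\mathbb{T}=\mathbb{R}\cup\{\infty\}$; $\mathcal{P}([n])$ the set of subsets of $[n]$. A tropical Wick vector is $p$ such that for all $S,T\subseteq[n]$ the minimum $\min_{i\in S\Delta T}(p_{S\Delta\{i\}}+p_{T\Delta\{i\}})$ is attained at least twice or equals $\infty$. The dual is $p^*$ with $p^*_S=p_{[n]\setminus S}$ (also a tropical Wick vector). Let $\mathcal{J}=\{1,\dots,n,1^*,\dots,n^*\}$ with involution $i\leftrightarrow i^*$; $X\subseteq\mathcal{J}$ is admissible if $X\cap X^*=\emptyset$, and a vector is admissible if its support (coordinates $\neq\infty$) is admissible. For $S\subseteq[n]$ let $\bar S=S\cup\{i^*:i\in[n]\setminus S\}$ and $\bar p_{\bar S}:=p_S$. For $T\subseteq[n]$: $(c_T)_i=\bar p_{\bar T\Delta\{i,i^*\}}$ if $i\in\bar T$, $\infty$ otherwise. Circuits of $p$: vectors $c_T+\lambda\mathbf{1}$ ($\lambda\in\mathbb{R}$) with nonempty support. $x,y$ are tropically orthogonal if $\min_k(x_k+y_k)$ is attained at least twice or equals $\infty$; for $X\subseteq\mathbb{T}^{\mathcal{J}}$, $X^\top$ is the set of vectors tropically orthogonal to all elements of $X$. The cocycle space $\mathcal{Q}(q)$ of a tropical Wick vector $q$ is the set of admissible vectors tropically orthogonal to all circuits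 of $q$. *)

theory Defs
  imports "HOL-Library.Extended_Real"
begin

text \<open>Tropical numbers T = R \<union> {\<infinity>} are modelled as extended reals that are never -\<infinity>.
  Index set J = {1..n, 1*..n*}: element Pos i is i, element Star i is i*.\<close>

datatype elt = Pos nat | Star nat

fun conj_elt :: "elt \<Rightarrow> elt" where
  "conj_elt (Pos i) = Star i"
| "conj_elt (Star i) = Pos i"

definition sdiff :: "'a set \<Rightarrow> 'a set \<Rightarrow> 'a set" where
  "sdiff A B = (A - B) \<union> (B - A)"

definition Jset :: "nat \<Rightarrow> elt set" where
  "Jset n = Pos ` {1..n} \<union> Star ` {1..n}"

definition trop_vanish :: "'a set \<Rightarrow> ('a \<Rightarrow> ereal) \<Rightarrow> bool" where
  "trop_vanish A f \<longleftrightarrow> (\<forall>k\<in>A. f k = \<infinity>) \<or>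
     (\<exists>i\<in>A. \<exists>j\<in>A. i \<noteq> j \<and> f i = f j \<and> (\<forall>k\<in>A. f i \<le> f k))"

definition is_Pvec :: "nat \<Rightarrow> (nat set \<Rightarrow> ereal) \<Rightarrow> bool" where
  "is_Pvec n p \<longleftrightarrow> (\<forall>S. S \<subseteq> {1..n} \<longrightarrow> p S \<noteq> -\<infinity>)"

definition tropical_wick :: "nat \<Rightarrow> (nat set \<Rightarrow> ereal) \<Rightarrow> bool" where
  "tropical_wick n p \<longleftrightarrow> is_Pvec n p \<and>
     (\<forall>S T. S \<subseteq> {1..n} \<longrightarrow> T \<subseteq> {1..n} \<longrightarrow>
        trop_vanish (sdiff S T) (\<lambda>i. p (sdiff S {i}) + p (sdiff T {i})))"

definition dual_vec :: "nat \<Rightarrow> (nat set \<Rightarrow> ereal) \<Rightarrow> (nat set \<Rightarrow> ereal)" where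
  "dual_vec n p = (\<lambda>S. p ({1..n} - S))"

definition tvec :: "nat \<Rightarrow> (elt \<Rightarrow> ereal) set" where
  "tvec n = {x. (\<forall>k\<in>Jset n. x k \<noteq> -\<infinity>) \<and> (\<forall>k. k \<notin> Jset n \<longrightarrow> x k = \<infinity>)}"

definition supp :: "nat \<Rightarrow> (elt \<Rightarrow> ereal) \<Rightarrow> elt set" where
  "supp n x = {k\<in>Jset n. x k \<noteq> \<infinity>}"

definition admissible_set :: "elt set \<Rightarrow> bool" where
  "admissible_set X \<longleftrightarrow> X \<inter> conj_elt ` X = {}"

definition admissible_vec :: "nat \<Rightarrow> (elt \<Rightarrow> ereal) \<Rightarrow> bool" where
  "admissible_vec n x \<longleftrightarrow> admissible_set (supp n x)"

definition bar_set :: "nat \<Rightarrow> nat set \<Rightarrow> elt set" where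
  "bar_set n S = Pos ` S \<union> Star ` ({1..n} - S)"

text \<open>bar p_{bar S} = p_S; for X = bar S we recover S as {i. Pos i \<in> X}.\<close>
definition bar_p :: "nat \<Rightarrow> (nat set \<Rightarrow> ereal) \<Rightarrow> elt set \<Rightarrow> ereal" where
  "bar_p n p X = p {i\<in>{1..n}. Pos i \<in> X}"

definition circ_vec :: "nat \<Rightarrow> (nat set \<Rightarrow> ereal) \<Rightarrow> nat set \<Rightarrow> elt \<Rightarrow> ereal" where
  "circ_vec n p T = (\<lambda>k. if k \<in> bar_set n T
      then bar_p n p (sdiff (bar_set n T) {k, conj_elt k}) else \<infinity>)"

definition circuits :: "nat \<Rightarrow> (nat set \<Rightarrow> ereal) \<Rightarrow> (elt \<Rightarrow> ereal) set" where
  "circuits n p = {x. \<exists>T lam. T \<subseteq> {1..n} \<and> x = (\<lambda>k. circ_vec n p T k + ereal lam)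
      \<and> supp n x \<noteq> {}}"

definition trop_orth :: "nat \<Rightarrow> (elt \<Rightarrow> ereal) \<Rightarrow> (elt \<Rightarrow> ereal) \<Rightarrow> bool" where
  "trop_orth n x y \<longleftrightarrow> trop_vanish (Jset n) (\<lambda>k. x k + y k)"

definition trop_perp :: "nat \<Rightarrow> (elt \<Rightarrow> ereal) set \<Rightarrow> (elt \<Rightarrow> ereal) set" where
  "trop_perp n X = {y \<in> tvec n. \<forall>x\<in>X. trop_orth n x y}"

definition cocycles :: "nat \<Rightarrow> (nat set \<Rightarrow> ereal) \<Rightarrow> (elt \<Rightarrow> ereal) set" where
  "cocycles n q = {x \<in> tvec n. admissible_vec n x \<and> (\<forall>c\<in>circuits n q. trop_orth n x c)}"

end

theory Submission imports Defs begin

lemma V3: "trop_vanish A f \<Longrightarrow> a \<in> A \<Longrightarrow> f a \<noteq> \<infinity> \<Longrightarrow> \<exists>b\<in>A. b \<noteq> a \<and> f b \<le> f a"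
  unfolding trop_vanish_def by (metis order_refl)

lemma UM: "a \<in> A \<Longrightarrow> f a \<noteq> \<infinity> \<Longrightarrow> (\<forall>b\<in>A. b\<noteq>a \<longrightarrow> f a < f b) \<Longrightarrow> \<not> trop_vanish A f"
  using V3 by fastforce

lemma NV: assumes "finite A" "\<not> trop_vanish A f"
  shows "\<exists>a\<in>A. f a \<noteq> \<infinity> \<and> (\<forall>b\<in>A. b \<noteq> a \<longrightarrow> f a < f b)"
proof -
  from assms(2) obtain k where k: "k \<in> A" "f k \<noteq> \<infinity>" unfolding trop_vanish_def by auto
  have ne: "f ` A \<noteq> {}" using k by auto
  obtain a where a: "a \<in> A" "f a = Min (f ` A)" using Min_in[OF finite_imageI[OF assms(1)] ne] by auto
  have le: "\<forall>b\<in>A. f a \<le> f b" using a assms(1) by simp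
  have fa: "f a \<noteq> \<infinity>" using le k by (metis infinity_ereal_def top.extremum_unique top_ereal_def)
  have "\<forall>b\<in>A. b \<noteq> a \<longrightarrow> f a < f b"
  proof (intro ballI impI)
    fix b assume b: "b \<in> A" "b \<noteq> a"
    show "f a < f b"
    proof (rule ccontr)
      assume "\<not> f a < f b"
      hence "f b = f a" using le b by (meson antisym not_less)
      hence "trop_vanish A f" unfolding trop_vanish_def using a b le by metis
      thus False using assms by simp
    qed
  qed
  thus ?thesis using a(1) fa by blast
qed

lemma G: assumes "inj_on g A" "g ` A \<subseteq> B" "\<And>a. a\<in>A \<Longrightarrow> f (g a) = h a"
  "\<And>b. b\<in>B \<Longrightarrow> b \<notin> g`A \<Longrightarrow> f b = \<infinity>"
  shows "trop_vanish B f \<longleftrightarrow> trop_vanish A h"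
proof
  assume v: "trop_vanish B f"
  show "trop_vanish A h"
  proof (cases "\<forall>a\<in>A. h a = \<infinity>")
    case True thus ?thesis unfolding trop_vanish_def by simp
  next
    case False
    then obtain a where a: "a\<in>A" "h a \<noteq> \<infinity>" by auto
    from v have "\<exists>i\<in>B. \<exists>j\<in>B. i \<noteq> j \<and> f i = f j \<and> (\<forall>k\<in>B. f i \<le> f k)"
      unfolding trop_vanish_def using a assms by force
    then obtain i j where ij: "i\<in>B" "j\<in>B" "i\<noteq>j" "f i = f j" "\<forall>k\<in>B. f i \<le> f k" by blast
    have fi: "f i \<noteq> \<infinity>" using ij(5) a assms(2,3)
      by (metis image_subset_iff infinity_ereal_def top.extremum_unique top_ereal_def)
    have "i \<in> g`A" using fi assms(4) ij by blast
    moreover have "j \<in> g`A" using fi ij assms(4) by metis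
    ultimately obtain a1 a2 where "a1\<in>A" "a2\<in>A" "i = g a1" "j = g a2" by blast
    thus ?thesis unfolding trop_vanish_def using ij assms(2,3)
      by (metis image_subset_iff)
  qed
next
  assume v: "trop_vanish A h"
  show "trop_vanish B f"
  proof (cases "\<forall>a\<in>A. h a = \<infinity>")
    case True
    have "\<forall>b\<in>B. f b = \<infinity>" using True assms(3,4) by force
    thus ?thesis unfolding trop_vanish_def by simp
  next
    case False
    then obtain i j where ij: "i\<in>A" "j\<in>A" "i\<noteq>j" "h i = h j" "\<forall>k\<in>A. h i \<le> h k"
      using v unfolding trop_vanish_def by blast
    have "\<forall>k\<in>B. f (g i) \<le> f k"
    proof
      fix k assume k: "k\<in>B"
      show "f (g i) \<le> f k"
      proof (cases "k \<in> g`A")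
        case True thus ?thesis using ij assms(3) by auto
      next
        case False thus ?thesis using assms(4) k by simp
      qed
    qed
    moreover have "g i \<noteq> g j" using ij assms(1) by (meson inj_on_contraD)
    ultimately show ?thesis unfolding trop_vanish_def using ij assms(2,3)
      by (metis image_subset_iff)
  qed
qed

lemma ereal_addc_le: "(x + ereal c \<le> y + ereal c) = (x \<le> (y::ereal))"
  by (cases x; cases y) auto
lemma ereal_addc_eq: "(x + ereal c = y + ereal c) = (x = (y::ereal))"
  by (cases x; cases y) auto
lemma ereal_addc_inf: "(x + ereal c = \<infinity>) = (x = \<infinity>)"
  by (cases x) auto

lemma shift: "trop_vanish A (\<lambda>a. h a + ereal c) \<longleftrightarrow> trop_vanish A h"
  unfolding trop_vanish_def by (simp add: ereal_addc_le ereal_addc_eq ereal_addc_inf)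

definition pos :: "nat set \<Rightarrow> nat \<Rightarrow> elt" where
  "pos S j = (if j \<in> S then Pos j else Star j)"

fun idx :: "elt \<Rightarrow> nat" where "idx (Pos i) = i" | "idx (Star i) = i"

lemma idx_pos[simp]: "idx (pos S j) = j" by (simp add: pos_def)
lemma idx_conj[simp]: "idx (conj_elt k) = idx k" by (cases k) auto
lemma conj_conj[simp]: "conj_elt (conj_elt k) = k" by (cases k) auto
lemma pos_eq_iff: "pos S j = pos S' j' \<longleftrightarrow> j = j' \<and> (j \<in> S \<longleftrightarrow> j' \<in> S')"
  by (auto simp: pos_def)
lemma pos_conj_iff: "pos S j = conj_elt (pos S' j') \<longleftrightarrow> j = j' \<and> (j \<in> S \<longleftrightarrow> j' \<notin> S')"
  by (auto simp: pos_def)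
lemma conj_pos_iff: "conj_elt (pos S j) = pos S' j' \<longleftrightarrow> j = j' \<and> (j \<in> S \<longleftrightarrow> j' \<notin> S')"
  by (auto simp: pos_def)
lemma conj_conj_pos_iff: "conj_elt (pos S j) = conj_elt (pos S' j') \<longleftrightarrow> j = j' \<and> (j \<in> S \<longleftrightarrow> j' \<in> S')"
  by (auto simp: pos_def)
lemma pos_in_J: "j \<in> {1..n} \<Longrightarrow> pos S j \<in> Jset n" by (auto simp: pos_def Jset_def)
lemma conj_pos_in_J: "j \<in> {1..n} \<Longrightarrow> conj_elt (pos S j) \<in> Jset n" by (auto simp: pos_def Jset_def)
lemma J_cases: assumes "k \<in> Jset n"
  obtains j where "j \<in> {1..n}" "k = pos S j" | j where "j \<in> {1..n}" "k = conj_elt (pos S j)"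
proof -
  have "k = pos S (idx k) \<or> k = conj_elt (pos S (idx k))" by (cases k) (auto simp: pos_def)
  moreover have "idx k \<in> {1..n}" using assms by (auto simp: Jset_def)
  ultimately show ?thesis using that by blast
qed
lemma finite_J: "finite (Jset n)" by (simp add: Jset_def)

lemma bar_sub_J: "W \<subseteq> {1..n} \<Longrightarrow> bar_set n W \<subseteq> Jset n"
  by (auto simp: bar_set_def Jset_def)

lemma circ_pos: assumes "W \<subseteq> {1..n}" "j \<in> {1..n}"
  shows "circ_vec n p W (pos W j) = p (sdiff W {j})"
    and "circ_vec n p W (conj_elt (pos W j)) = \<infinity>"
proof -
  show "circ_vec n p W (pos W j) = p (sdiff W {j})"
  proof (cases "j \<in> W")
    case True
    have e: "{i \<in> {1..n}. Pos i \<in> sdiff (bar_set n W) {Pos j, conj_elt (Pos j)}} = sdiff W {j}"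
      using True assms by (auto simp: sdiff_def bar_set_def)
    show ?thesis using True e by (simp add: circ_vec_def pos_def bar_p_def bar_set_def)
  next
    case False
    have e: "{i \<in> {1..n}. Pos i \<in> sdiff (bar_set n W) {Star j, conj_elt (Star j)}} = sdiff W {j}"
      using False assms by (auto simp: sdiff_def bar_set_def)
    show ?thesis using False e assms by (simp add: circ_vec_def pos_def bar_p_def bar_set_def)
  qed
  show "circ_vec n p W (conj_elt (pos W j)) = \<infinity>"
    using assms by (auto simp: circ_vec_def pos_def bar_set_def)
qed

lemma circ_out: "W \<subseteq> {1..n} \<Longrightarrow> k \<notin> Jset n \<Longrightarrow> circ_vec n p W k = \<infinity>"
  using bar_sub_J by (auto simp: circ_vec_def)

lemma pos_compl: "j \<in> {1..n} \<Longrightarrow> pos ({1..n} - V) j = conj_elt (pos V j)"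
  by (auto simp: pos_def)

lemma circ_dual: assumes "V \<subseteq> {1..n}" "j \<in> {1..n}"
  shows "circ_vec n (dual_vec n p) ({1..n} - V) (conj_elt (pos V j)) = p (sdiff V {j})"
    and "circ_vec n (dual_vec n p) ({1..n} - V) (pos V j) = \<infinity>"
proof -
  have W: "{1..n} - V \<subseteq> {1..n}" by auto
  have e: "{1..n} - sdiff ({1..n} - V) {j} = sdiff V {j}"
    using assms by (auto simp: sdiff_def)
  show "circ_vec n (dual_vec n p) ({1..n} - V) (conj_elt (pos V j)) = p (sdiff V {j})"
    using circ_pos(1)[OF W assms(2), of "dual_vec n p"] pos_compl[OF assms(2), of V] e
    by (simp add: dual_vec_def)
  show "circ_vec n (dual_vec n p) ({1..n} - V) (pos V j) = \<infinity>"
    using circ_pos(2)[OF W assms(2), of "dual_vec n p"] pos_compl[OF assms(2), of V] by simp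
qed

lemma inf_add: "b \<noteq> -\<infinity> \<Longrightarrow> \<infinity> + b = (\<infinity>::ereal)" by (cases b) auto
lemma add_inf: "b \<noteq> -\<infinity> \<Longrightarrow> b + \<infinity> = (\<infinity>::ereal)" by (cases b) auto

lemma orth_sym: "trop_orth n x y \<longleftrightarrow> trop_orth n y x"
  unfolding trop_orth_def by (simp add: add.commute)

lemma sdiff_sub: "A \<subseteq> N \<Longrightarrow> B \<subseteq> N \<Longrightarrow> sdiff A B \<subseteq> N" by (auto simp: sdiff_def)

lemma circ_not_minf: assumes "is_Pvec n p" "W \<subseteq> {1..n}"
  shows "circ_vec n p W k \<noteq> -\<infinity>"
proof (cases "k \<in> Jset n")
  case True
  then show ?thesis
  proof (cases rule: J_cases[where S=W])
    case (1 j)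
    have "sdiff W {j} \<subseteq> {1..n}" using assms(2) 1 by (auto simp: sdiff_def)
    then show ?thesis using circ_pos(1)[OF assms(2) 1(1)] 1 assms(1) by (simp add: is_Pvec_def)
  next
    case (2 j)
    then show ?thesis using circ_pos(2)[OF assms(2) 2(1)] by simp
  qed
next
  case False
  then show ?thesis using circ_out[OF assms(2)] by simp
qed

lemma dual_Pvec: "is_Pvec n p \<Longrightarrow> is_Pvec n (dual_vec n p)"
  by (auto simp: is_Pvec_def dual_vec_def)

lemma dual_circ_in_cocycles:
  assumes w: "tropical_wick n p" and V: "V \<subseteq> {1..n}"
  shows "(\<lambda>k. circ_vec n (dual_vec n p) ({1..n} - V) k + ereal lam) \<in> cocycles n p"
proof -
  let ?N = "{1..n}"
  define c where "c = (\<lambda>k. circ_vec n (dual_vec n p) ({1..n} - V) k + ereal lam)"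
  have Pv: "is_Pvec n p" using w by (simp add: tropical_wick_def)
  have UN: "?N - V \<subseteq> ?N" by auto
  have cnm: "\<And>k. c k \<noteq> -\<infinity>"
    using circ_not_minf[OF dual_Pvec[OF Pv] UN] by (simp add: c_def)
  have cout: "\<And>k. k \<notin> Jset n \<Longrightarrow> c k = \<infinity>" using circ_out[OF UN] by (simp add: c_def)
  have cpos: "\<And>j. j \<in> ?N \<Longrightarrow> c (pos V j) = \<infinity>" using circ_dual(2)[OF V] by (simp add: c_def)
  have cconj: "\<And>j. j \<in> ?N \<Longrightarrow> c (conj_elt (pos V j)) = p (sdiff V {j}) + ereal lam"
    using circ_dual(1)[OF V] by (simp add: c_def)
  have tv: "c \<in> tvec n" using cnm cout by (simp add: tvec_def)
  have supp: "supp n c \<subseteq> {conj_elt (pos V j) | j. j \<in> ?N}"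
  proof
    fix k assume k: "k \<in> supp n c"
    hence kJ: "k \<in> Jset n" and kf: "c k \<noteq> \<infinity>" by (auto simp: supp_def)
    from kJ show "k \<in> {conj_elt (pos V j) | j. j \<in> ?N}"
    proof (cases rule: J_cases[where S=V])
      case (1 j) thus ?thesis using kf cpos by simp
    next
      case (2 j) thus ?thesis by blast
    qed
  qed
  have adm: "admissible_vec n c"
    unfolding admissible_vec_def admissible_set_def
  proof (rule ccontr)
    assume "supp n c \<inter> conj_elt ` supp n c \<noteq> {}"
    then obtain k k' where "k \<in> supp n c" "k' \<in> supp n c" "k = conj_elt k'" by blast
    with supp obtain j j' where "k = conj_elt (pos V j)" "k' = conj_elt (pos V j')" by blast
    with \<open>k = conj_elt k'\<close> show False by (simp add: conj_pos_iff) blast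
  qed
  have orth: "\<forall>c'\<in>circuits n p. trop_orth n c c'"
  proof
    fix c' assume "c' \<in> circuits n p"
    then obtain W mu where W: "W \<subseteq> ?N" and c': "c' = (\<lambda>k. circ_vec n p W k + ereal mu)"
      unfolding circuits_def by blast
    have c'nm: "\<And>k. c' k \<noteq> -\<infinity>"
      using circ_not_minf[OF Pv W] by (simp add: c')
    have c'pos: "\<And>j. j \<in> ?N \<Longrightarrow> c' (pos W j) = p (sdiff W {j}) + ereal mu"
      using circ_pos(1)[OF W] by (simp add: c')
    have c'conj: "\<And>j. j \<in> ?N \<Longrightarrow> c' (conj_elt (pos W j)) = \<infinity>"
      using circ_pos(2)[OF W] by (simp add: c')
    let ?A = "sdiff V W"
    have AN: "?A \<subseteq> ?N" using V W by (auto simp: sdiff_def)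
    have wk: "trop_vanish ?A (\<lambda>i. p (sdiff V {i}) + p (sdiff W {i}))"
      using w V W by (simp add: tropical_wick_def)
    have "trop_vanish (Jset n) (\<lambda>k. c k + c' k) \<longleftrightarrow>
          trop_vanish ?A (\<lambda>j. (p (sdiff V {j}) + p (sdiff W {j})) + ereal (lam + mu))"
    proof (rule G)
      show "inj_on (pos W) ?A" by (auto simp: inj_on_def pos_eq_iff)
      show "pos W ` ?A \<subseteq> Jset n" using AN pos_in_J by blast
      fix a assume a: "a \<in> ?A"
      have aN: "a \<in> ?N" using a AN by blast
      have "pos W a = conj_elt (pos V a)" using a by (auto simp: pos_def sdiff_def)
      hence "c (pos W a) = p (sdiff V {a}) + ereal lam" using cconj[OF aN] by simp
      thus "c (pos W a) + c' (pos W a) = (p (sdiff V {a}) + p (sdiff W {a})) + ereal (lam + mu)"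
        using c'pos[OF aN] by (simp add: add_ac flip: plus_ereal.simps(1))
    next
      fix b assume b: "b \<in> Jset n" "b \<notin> pos W ` ?A"
      from b(1) show "c b + c' b = \<infinity>"
      proof (cases rule: J_cases[where S=W])
        case (1 j)
        hence "j \<notin> ?A" using b(2) by blast
        hence "pos W j = pos V j" by (auto simp: pos_def sdiff_def)
        hence "c b = \<infinity>" using 1 cpos by simp
        thus ?thesis using inf_add[OF c'nm] by simp
      next
        case (2 j)
        hence "c' b = \<infinity>" using c'conj by simp
        thus ?thesis using add_inf[OF cnm] by simp
      qed
    qed
    also have "\<dots>" unfolding shift by (rule wk)
    finally show "trop_orth n c c'" by (simp add: trop_orth_def)
  qed
  have "c \<in> cocycles n p" using tv adm orth by (simp add: cocycles_def)
  thus ?thesis by (simp add: c_def)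
qed

lemma sup_dir:
  assumes w: "tropical_wick n p" and x: "x \<in> trop_perp n (cocycles n p)" and a: "admissible_vec n x"
  shows "x \<in> cocycles n (dual_vec n p)"
proof -
  have xt: "x \<in> tvec n" and xo: "\<forall>c\<in>cocycles n p. trop_orth n c x" using x by (auto simp: trop_perp_def)
  have "\<forall>c\<in>circuits n (dual_vec n p). trop_orth n x c"
  proof
    fix c assume "c \<in> circuits n (dual_vec n p)"
    then obtain U lam where U: "U \<subseteq> {1..n}" and c: "c = (\<lambda>k. circ_vec n (dual_vec n p) U k + ereal lam)"
      unfolding circuits_def by blast
    have e: "{1..n} - ({1..n} - U) = U" using U by auto
    have "c \<in> cocycles n p" using dual_circ_in_cocycles[OF w, of "{1..n} - U" lam] e c by simp
    thus "trop_orth n x c" using xo orth_sym by blast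
  qed
  thus ?thesis using xt a by (simp add: cocycles_def)
qed

lemma orth_circ_all:
  assumes y: "y \<in> cocycles n p" and Pv: "is_Pvec n p" and W: "W \<subseteq> {1..n}"
  shows "trop_orth n y (circ_vec n p W)"
proof (cases "supp n (circ_vec n p W) = {}")
  case False
  have "circ_vec n p W \<in> circuits n p"
    unfolding circuits_def using W False by (auto intro!: exI[of _ W] exI[of _ 0] simp: zero_ereal_def[symmetric])
  thus ?thesis using y by (simp add: cocycles_def)
next
  case True
  have ynm: "\<And>k. y k \<noteq> -\<infinity>" using y by (auto simp: cocycles_def tvec_def)
  have "\<forall>k\<in>Jset n. y k + circ_vec n p W k = \<infinity>"
    using True add_inf[OF ynm] by (auto simp: supp_def)
  thus ?thesis by (simp add: trop_orth_def trop_vanish_def)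
qed

lemma le_fin: "(x::ereal) \<le> y \<Longrightarrow> y \<noteq> \<infinity> \<Longrightarrow> x \<noteq> \<infinity>"
  by auto

lemma gen:
  assumes y: "y \<in> cocycles n p" and Pv: "is_Pvec n p" and ne: "\<exists>S\<subseteq>{1..n}. p S \<noteq> \<infinity>"
    and k0: "k0 \<in> Jset n" "y k0 \<noteq> \<infinity>"
  shows "\<exists>V lam. V \<subseteq> {1..n} \<and> (\<forall>k\<in>Jset n. y k \<le> circ_vec n (dual_vec n p) ({1..n} - V) k + ereal lam)
     \<and> circ_vec n (dual_vec n p) ({1..n} - V) k0 + ereal lam = y k0"
proof -
  let ?N = "{1..n}"
  have yt: "y \<in> tvec n" and yadm: "admissible_vec n y" using y by (auto simp: cocycles_def)
  have ynm: "\<And>k. y k \<noteq> -\<infinity>" using yt by (auto simp: tvec_def)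
  have pnm: "\<And>X. X \<subseteq> ?N \<Longrightarrow> p X \<noteq> -\<infinity>" using Pv by (simp add: is_Pvec_def)
  define S where "S = {i\<in>?N. y (Pos i) \<noteq> \<infinity>}"
  have SN: "S \<subseteq> ?N" by (auto simp: S_def)
  have yconj: "\<And>j. j \<in> ?N \<Longrightarrow> y (conj_elt (pos S j)) = \<infinity>"
  proof -
    fix j assume j: "j \<in> ?N"
    show "y (conj_elt (pos S j)) = \<infinity>"
    proof (cases "j \<in> S")
      case True
      show ?thesis
      proof (rule ccontr)
        assume a: "y (conj_elt (pos S j)) \<noteq> \<infinity>"
        have "Star j \<in> supp n y" using a True j by (auto simp: pos_def supp_def Jset_def)
        moreover have "Pos j \<in> supp n y" using True j by (auto simp: S_def supp_def Jset_def)
        ultimately have "Pos j \<in> supp n y \<inter> conj_elt ` supp n y" by force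
        thus False using yadm by (simp add: admissible_vec_def admissible_set_def) blast
      qed
    next
      case False thus ?thesis using j by (simp add: pos_def S_def)
    qed
  qed
  define u where "u j = y (pos S j)" for j
  define Z where "Z = {j\<in>?N. u j \<noteq> \<infinity>}"
  have unm: "\<And>j. u j \<noteq> -\<infinity>" by (simp add: u_def ynm)
  have U: "\<And>A. A \<subseteq> ?N \<Longrightarrow> trop_vanish (?N - A) (\<lambda>j. u j + p (sdiff (sdiff S A) {j}))"
  proof -
    fix A assume A: "A \<subseteq> ?N"
    let ?W = "sdiff S A"
    have W: "?W \<subseteq> ?N" using A SN by (auto simp: sdiff_def)
    have o: "trop_vanish (Jset n) (\<lambda>k. y k + circ_vec n p ?W k)"
      using orth_circ_all[OF y Pv W] by (simp add: trop_orth_def)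
    have cnm: "\<And>k. circ_vec n p ?W k \<noteq> -\<infinity>" using circ_not_minf[OF Pv W] .
    have "trop_vanish (Jset n) (\<lambda>k. y k + circ_vec n p ?W k) \<longleftrightarrow>
          trop_vanish (?N - A) (\<lambda>j. u j + p (sdiff ?W {j}))"
    proof (rule G)
      show "inj_on (pos S) (?N - A)" by (auto simp: inj_on_def pos_eq_iff)
      show "pos S ` (?N - A) \<subseteq> Jset n" using pos_in_J by blast
      fix a assume a: "a \<in> ?N - A"
      have "pos S a = pos ?W a" using a by (auto simp: pos_def sdiff_def)
      thus "y (pos S a) + circ_vec n p ?W (pos S a) = u a + p (sdiff ?W {a})"
        using circ_pos(1)[OF W, of a] a by (simp add: u_def)
    next
      fix b assume b: "b \<in> Jset n" "b \<notin> pos S ` (?N - A)"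
      from b(1) show "y b + circ_vec n p ?W b = \<infinity>"
      proof (cases rule: J_cases[where S=S])
        case (1 j)
        hence jA: "j \<in> A" using b(2) by blast
        hence "pos S j = conj_elt (pos ?W j)" by (auto simp: pos_def sdiff_def)
        thus ?thesis using 1 circ_pos(2)[OF W 1(1)] add_inf[OF ynm] by simp
      next
        case (2 j)
        thus ?thesis using yconj inf_add[OF cnm] by simp
      qed
    qed
    thus "trop_vanish (?N - A) (\<lambda>j. u j + p (sdiff (sdiff S A) {j}))" using o by simp
  qed
  have Ukey: "\<And>A a. A \<subseteq> ?N \<Longrightarrow> a \<in> ?N - A \<Longrightarrow> u a + p (sdiff (sdiff S A) {a}) \<noteq> \<infinity> \<Longrightarrow>
     \<exists>b\<in>?N - A. b \<noteq> a \<and> u b + p (sdiff (sdiff S A) {b}) \<le> u a + p (sdiff (sdiff S A) {a})"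
  proof -
    fix A a assume h: "A \<subseteq> ?N" "a \<in> ?N - A" "u a + p (sdiff (sdiff S A) {a}) \<noteq> \<infinity>"
    show "\<exists>b\<in>?N - A. b \<noteq> a \<and> u b + p (sdiff (sdiff S A) {b}) \<le> u a + p (sdiff (sdiff S A) {a})"
      using V3[OF U[OF h(1)] h(2)] h(3) by simp
  qed
  define i0 where "i0 = idx k0"
  have i0N: "i0 \<in> ?N" using k0(1) by (auto simp: i0_def Jset_def)
  have k0pos: "k0 = pos S i0"
    using k0(1) proof (cases rule: J_cases[where S=S])
    case (1 j) thus ?thesis by (simp add: i0_def)
  next
    case (2 j) thus ?thesis using yconj k0(2) by simp
  qed
  have ui0: "u i0 \<noteq> \<infinity>" using k0pos k0(2) by (simp add: u_def)
  define F where "F = {X. X \<subseteq> ?N \<and> p X \<noteq> \<infinity>}"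
  have finF: "finite F" unfolding F_def by (rule finite_subset[of _ "Pow ?N"]) auto
  have neF: "F \<noteq> {}" using ne by (auto simp: F_def)
  define r where "r = Max ((\<lambda>X. card (sdiff S X)) ` F)"
  have rmax: "\<And>X. X \<subseteq> ?N \<Longrightarrow> p X \<noteq> \<infinity> \<Longrightarrow> card (sdiff S X) \<le> r"
    unfolding r_def using finF by (intro Max_ge) (auto simp: F_def)
  have "r \<in> (\<lambda>X. card (sdiff S X)) ` F" unfolding r_def using finF neF by (intro Max_in) auto
  then obtain X1 where X1: "X1 \<in> F" "card (sdiff S X1) = r" by blast
  define Cand where "Cand = {X\<in>F. card (sdiff S X) = r \<and> i0 \<notin> sdiff S X}"
  have finC: "finite Cand" using finF by (simp add: Cand_def)
  have neC: "Cand \<noteq> {}"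
  proof (cases "i0 \<in> sdiff S X1")
    case False thus ?thesis using X1 by (auto simp: Cand_def)
  next
    case True
    define A where "A = sdiff S X1 - {i0}"
    have X1N: "X1 \<subseteq> ?N" and pX1: "p X1 \<noteq> \<infinity>" using X1 by (auto simp: F_def)
    have AN: "A \<subseteq> ?N" using X1N SN by (auto simp: A_def sdiff_def)
    have eSA: "sdiff S A = sdiff X1 {i0}" using True by (auto simp: A_def sdiff_def)
    have ee: "sdiff (sdiff X1 {i0}) {i0} = X1" by (auto simp: sdiff_def)
    have i0A: "i0 \<in> ?N - A" using i0N by (simp add: A_def)
    have fin: "u i0 + p (sdiff (sdiff S A) {i0}) \<noteq> \<infinity>"
      using ui0 pX1 unm pnm[OF X1N] by (simp add: eSA ee)
    obtain b where b: "b \<in> ?N - A" "b \<noteq> i0"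
      "u b + p (sdiff (sdiff S A) {b}) \<le> u i0 + p (sdiff (sdiff S A) {i0})"
      using Ukey[OF AN i0A fin] by blast
    have "u b + p (sdiff (sdiff S A) {b}) \<noteq> \<infinity>" using le_fin[OF b(3) fin] .
    hence pb: "p (sdiff (sdiff S A) {b}) \<noteq> \<infinity>" using unm by auto
    let ?X = "sdiff (sdiff S A) {b}"
    have XN: "?X \<subseteq> ?N" using AN SN b(1) by (auto simp: sdiff_def)
    have eX: "sdiff S ?X = insert b A" using b(1) by (auto simp: sdiff_def)
    have cA: "card A = r - 1" using X1 True by (simp add: A_def card_Diff_singleton)
    have "finite (sdiff S X1)" using sdiff_sub[OF SN X1N] finite_subset by blast
    hence "card (sdiff S X1) > 0" using True by (auto simp: card_gt_0_iff)
    hence rpos: "r \<ge> 1" using X1(2) by simp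
    have finA: "finite A" using AN finite_subset by blast
    have "card (sdiff S ?X) = r" using eX b(1) cA rpos finA by simp
    moreover have "i0 \<notin> sdiff S ?X" using eX b by (simp add: A_def)
    ultimately have "?X \<in> Cand" using XN pb by (simp add: Cand_def F_def)
    thus ?thesis by blast
  qed
  define m where "m X = card (sdiff S X - Z)" for X
  define m0 where "m0 = Min (m ` Cand)"
  have m0le: "\<And>X. X \<in> Cand \<Longrightarrow> m0 \<le> m X" unfolding m0_def using finC by simp
  have "m0 \<in> m ` Cand" unfolding m0_def using finC neC by (intro Min_in) auto
  define Cand2 where "Cand2 = {X\<in>Cand. m X = m0}"
  have finC2: "finite Cand2" using finC by (simp add: Cand2_def)
  have neC2: "Cand2 \<noteq> {}" using \<open>m0 \<in> m ` Cand\<close> by (auto simp: Cand2_def)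
  define Om where "Om X = real_of_ereal (p X) + (\<Sum>j\<in>sdiff S X \<inter> Z. real_of_ereal (u j))" for X
  have "Min (Om ` Cand2) \<in> Om ` Cand2" using finC2 neC2 by (intro Min_in) auto
  then obtain X0 where X0: "X0 \<in> Cand2" "Om X0 = Min (Om ` Cand2)" by auto
  have Omle: "\<And>X. X \<in> Cand2 \<Longrightarrow> Om X0 \<le> Om X" using X0 finC2 by simp
  have X0N: "X0 \<subseteq> ?N" and pX0: "p X0 \<noteq> \<infinity>" and cX0: "card (sdiff S X0) = r"
    and i0X0: "i0 \<notin> sdiff S X0" and mX0: "m X0 = m0"
    using X0(1) by (auto simp: Cand2_def Cand_def F_def)
  define B0 where "B0 = sdiff S X0"
  define V where "V = sdiff X0 {i0}"
  define lam where "lam = real_of_ereal (u i0) - real_of_ereal (p X0)"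
  have VN: "V \<subseteq> ?N" using X0N i0N by (auto simp: V_def sdiff_def)
  have B0N: "B0 \<subseteq> ?N" using X0N SN by (auto simp: B0_def sdiff_def)
  have finB0: "finite B0" using B0N finite_subset by blast
  have i0B0: "i0 \<notin> B0" using i0X0 by (simp add: B0_def)
  have T: "sdiff S V = insert i0 B0" using i0X0 by (auto simp: B0_def V_def sdiff_def)
  have cB0: "card B0 = r" using cX0 by (simp add: B0_def)
  have cT: "card (sdiff S V) = Suc r" using T finB0 i0B0 cB0 by simp
  have pX0nm: "p X0 \<noteq> -\<infinity>" using pnm[OF X0N] .
  have ceq: "p X0 + ereal lam = u i0"
    using pX0 pX0nm ui0 unm[of i0] unfolding lam_def
    by (cases "p X0"; cases "u i0") auto
  have sfin: "\<And>a b::ereal. a + b \<noteq> \<infinity> \<Longrightarrow> a \<noteq> -\<infinity> \<Longrightarrow> b \<noteq> -\<infinity> \<Longrightarrow> a \<noteq> \<infinity> \<and> b \<noteq> \<infinity>"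
    by auto
  have core: "\<And>j. j \<in> B0 \<Longrightarrow> u j \<le> p (sdiff V {j}) + ereal lam"
  proof -
    fix j assume jB: "j \<in> B0"
    have jN: "j \<in> ?N" using jB B0N by blast
    have ji0: "j \<noteq> i0" using jB i0B0 by auto
    define A where "A = B0 - {j}"
    have AN: "A \<subseteq> ?N" using B0N by (auto simp: A_def)
    have finA: "finite A" using finB0 by (simp add: A_def)
    have eSA: "sdiff S A = sdiff X0 {j}" using jB by (auto simp: A_def B0_def sdiff_def)
    have ej: "sdiff (sdiff X0 {j}) {j} = X0" by (auto simp: sdiff_def)
    have ei0: "sdiff (sdiff X0 {j}) {i0} = sdiff V {j}" by (auto simp: V_def sdiff_def)
    have i0A: "i0 \<in> ?N - A" using i0N i0B0 by (auto simp: A_def)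
    have VjN: "sdiff V {j} \<subseteq> ?N" using VN jN by (auto simp: sdiff_def)
    have rpos: "r \<ge> 1" using jB finB0 cB0 by (metis One_nat_def Suc_leI card_gt_0_iff empty_iff)
    have cA: "card A = r - 1" using jB cB0 finB0 by (simp add: A_def)
    have newc: "\<And>b. b \<in> ?N - A \<Longrightarrow> b \<noteq> i0 \<Longrightarrow> b \<noteq> j \<Longrightarrow> p (sdiff (sdiff X0 {j}) {b}) \<noteq> \<infinity> \<Longrightarrow>
        sdiff (sdiff X0 {j}) {b} \<in> Cand \<and> sdiff S (sdiff (sdiff X0 {j}) {b}) = insert b A"
    proof -
      fix b assume b: "b \<in> ?N - A" "b \<noteq> i0" "b \<noteq> j" "p (sdiff (sdiff X0 {j}) {b}) \<noteq> \<infinity>"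
      have bB: "b \<notin> B0" using b by (auto simp: A_def)
      have e: "sdiff S (sdiff (sdiff X0 {j}) {b}) = insert b A"
        using jB bB b(3) by (auto simp: A_def B0_def sdiff_def)
      have XN: "sdiff (sdiff X0 {j}) {b} \<subseteq> ?N" using X0N jN b(1) by (auto simp: sdiff_def)
      have "card (insert b A) = r" using finA b(1) cA rpos by simp
      moreover have "i0 \<notin> insert b A" using b(2) i0B0 by (simp add: A_def)
      ultimately show "sdiff (sdiff X0 {j}) {b} \<in> Cand \<and> sdiff S (sdiff (sdiff X0 {j}) {b}) = insert b A"
        using e XN b(4) by (simp add: Cand_def F_def)
    qed
    show "u j \<le> p (sdiff V {j}) + ereal lam"
    proof (cases "u j = \<infinity>")
      case True
      have "p (sdiff V {j}) = \<infinity>"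
      proof (rule ccontr)
        assume pf: "p (sdiff V {j}) \<noteq> \<infinity>"
        have fin: "u i0 + p (sdiff (sdiff S A) {i0}) \<noteq> \<infinity>"
          using ui0 pf unm[of i0] pnm[OF VjN] by (simp add: eSA ei0)
        obtain b where b: "b \<in> ?N - A" "b \<noteq> i0"
          "u b + p (sdiff (sdiff S A) {b}) \<le> u i0 + p (sdiff (sdiff S A) {i0})"
          using Ukey[OF AN i0A fin] by blast
        have XbN: "sdiff (sdiff X0 {j}) {b} \<subseteq> ?N" using X0N jN b(1) by (auto simp: sdiff_def)
        have bf: "u b + p (sdiff (sdiff X0 {j}) {b}) \<noteq> \<infinity>" using le_fin[OF b(3) fin] eSA by simp
        have ub: "u b \<noteq> \<infinity>" and pb: "p (sdiff (sdiff X0 {j}) {b}) \<noteq> \<infinity>"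
          using sfin[OF bf unm pnm[OF XbN]] by auto
        have bj: "b \<noteq> j" using ub True by auto
        have bZ: "b \<in> Z" using ub b(1) by (simp add: Z_def)
        have jZ: "j \<notin> Z" using True by (simp add: Z_def)
        from newc[OF b(1) b(2) bj pb] have XC: "sdiff (sdiff X0 {j}) {b} \<in> Cand"
          and eX: "sdiff S (sdiff (sdiff X0 {j}) {b}) = insert b A" by auto
        have "m (sdiff (sdiff X0 {j}) {b}) = card (A - Z)" using eX bZ by (simp add: m_def)
        also have "A - Z = (B0 - Z) - {j}" by (auto simp: A_def)
        also have "card ((B0 - Z) - {j}) < card (B0 - Z)"
          using jB jZ finB0 by (intro card_Diff1_less) auto
        also have "card (B0 - Z) = m0" using mX0 by (simp add: m_def B0_def)
        finally show False using m0le[OF XC] by simp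
      qed
      thus ?thesis by simp
    next
      case False
      show ?thesis
      proof (rule ccontr)
        assume neg: "\<not> u j \<le> p (sdiff V {j}) + ereal lam"
        have pf: "p (sdiff V {j}) \<noteq> \<infinity>" using neg by auto
        obtain a where a: "u j = ereal a" using False unm[of j] by (cases "u j") auto
        obtain b0 where b0: "p X0 = ereal b0" using pX0 pX0nm by (cases "p X0") auto
        obtain c where c: "p (sdiff V {j}) = ereal c" using pf pnm[OF VjN] by (cases "p (sdiff V {j})") auto
        obtain e where e: "u i0 = ereal e" using ui0 unm[of i0] by (cases "u i0") auto
        have lam: "lam = e - b0" using e b0 by (simp add: lam_def)
        have ineq: "a > c + e - b0" using neg a c lam by simp
        have fin: "u i0 + p (sdiff (sdiff S A) {i0}) \<noteq> \<infinity>"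
          using e c by (simp add: eSA ei0)
        obtain b where b: "b \<in> ?N - A" "b \<noteq> i0"
          "u b + p (sdiff (sdiff S A) {b}) \<le> u i0 + p (sdiff (sdiff S A) {i0})"
          using Ukey[OF AN i0A fin] by blast
        have XbN: "sdiff (sdiff X0 {j}) {b} \<subseteq> ?N" using X0N jN b(1) by (auto simp: sdiff_def)
        have tb: "u b + p (sdiff (sdiff X0 {j}) {b}) \<le> ereal (e + c)" using b(3) e c by (simp add: eSA ei0)
        have bf: "u b + p (sdiff (sdiff X0 {j}) {b}) \<noteq> \<infinity>" using tb by auto
        have ub: "u b \<noteq> \<infinity>" and pb: "p (sdiff (sdiff X0 {j}) {b}) \<noteq> \<infinity>"
          using sfin[OF bf unm pnm[OF XbN]] by auto
        obtain ubr where ubr: "u b = ereal ubr" using ub unm[of b] by (cases "u b") auto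
        obtain pbr where pbr: "p (sdiff (sdiff X0 {j}) {b}) = ereal pbr" using pb pnm[OF XbN]
          by (cases "p (sdiff (sdiff X0 {j}) {b})") auto
        have tbr: "ubr + pbr \<le> e + c" using tb ubr pbr by simp
        have bj: "b \<noteq> j"
        proof
          assume "b = j"
          hence "ubr + pbr = a + b0" using ubr pbr a b0 ej by simp
          thus False using tbr ineq by simp
        qed
        have bZ: "b \<in> Z" using ub b(1) by (simp add: Z_def)
        have jZ: "j \<in> Z" using False jN by (simp add: Z_def)
        from newc[OF b(1) b(2) bj pb] have XC: "sdiff (sdiff X0 {j}) {b} \<in> Cand"
          and eX: "sdiff S (sdiff (sdiff X0 {j}) {b}) = insert b A" by auto
        have "m (sdiff (sdiff X0 {j}) {b}) = card (A - Z)" using eX bZ by (simp add: m_def)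
        also have "A - Z = B0 - Z" using jZ by (auto simp: A_def)
        also have "card (B0 - Z) = m0" using mX0 by (simp add: m_def B0_def)
        finally have "sdiff (sdiff X0 {j}) {b} \<in> Cand2" using XC by (simp add: Cand2_def)
        hence le: "Om X0 \<le> Om (sdiff (sdiff X0 {j}) {b})" by (rule Omle)
        have bA: "b \<notin> A \<inter> Z" using b(1) by auto
        have jA: "j \<notin> A \<inter> Z" by (simp add: A_def)
        have finAZ: "finite (A \<inter> Z)" using finA by simp
        have s1: "insert b A \<inter> Z = insert b (A \<inter> Z)" using bZ by auto
        have s2: "B0 \<inter> Z = insert j (A \<inter> Z)" using jB jZ by (auto simp: A_def)
        have "Om (sdiff (sdiff X0 {j}) {b}) = pbr + (ubr + (\<Sum>i\<in>A \<inter> Z. real_of_ereal (u i)))"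
          unfolding Om_def eX s1 using pbr ubr finAZ bA by simp
        moreover have "Om X0 = b0 + (a + (\<Sum>i\<in>A \<inter> Z. real_of_ereal (u i)))"
          unfolding Om_def B0_def[symmetric] s2 using b0 a finAZ jA by simp
        ultimately show False using le tbr ineq by simp
      qed
    qed
  qed
  let ?c = "circ_vec n (dual_vec n p) (?N - V)"
  have main: "\<forall>k\<in>Jset n. y k \<le> ?c k + ereal lam"
  proof
    fix k assume kJ: "k \<in> Jset n"
    from kJ show "y k \<le> ?c k + ereal lam"
    proof (cases rule: J_cases[where S=S])
      case (1 j)
      show ?thesis
      proof (cases "j \<in> sdiff S V")
        case False
        hence "pos S j = pos V j" by (auto simp: pos_def sdiff_def)
        hence "?c k = \<infinity>" using circ_dual(2)[OF VN 1(1)] 1 by simp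
        thus ?thesis by simp
      next
        case True
        hence pc: "pos S j = conj_elt (pos V j)" by (auto simp: pos_def sdiff_def)
        hence ck: "?c k = p (sdiff V {j})" using circ_dual(1)[OF VN 1(1)] 1 by simp
        show ?thesis
        proof (cases "j = i0")
          case True
          have "sdiff V {i0} = X0" by (auto simp: V_def sdiff_def)
          thus ?thesis using ck ceq 1 True by (simp add: u_def)
        next
          case False
          hence "j \<in> B0" using \<open>j \<in> sdiff S V\<close> T by auto
          thus ?thesis using core ck 1 by (simp add: u_def)
        qed
      qed
    next
      case (2 j)
      have yk: "y k = \<infinity>" using yconj 2 by simp
      show ?thesis
      proof (cases "j \<in> sdiff S V")
        case True
        hence "conj_elt (pos S j) = pos V j" by (auto simp: pos_def sdiff_def)
        hence "?c k = \<infinity>" using circ_dual(2)[OF VN 2(1)] 2 by simp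
        thus ?thesis using yk by simp
      next
        case False
        hence "conj_elt (pos S j) = conj_elt (pos V j)" by (auto simp: pos_def sdiff_def)
        hence ck: "?c k = p (sdiff V {j})" using circ_dual(1)[OF VN 2(1)] 2 by simp
        have "p (sdiff V {j}) = \<infinity>"
        proof (rule ccontr)
          assume "p (sdiff V {j}) \<noteq> \<infinity>"
          moreover have "sdiff V {j} \<subseteq> ?N" using VN 2(1) by (auto simp: sdiff_def)
          ultimately have "card (sdiff S (sdiff V {j})) \<le> r" using rmax by blast
          moreover have "sdiff S (sdiff V {j}) = insert j (sdiff S V)" using False by (auto simp: sdiff_def)
          moreover have "finite (sdiff S V)" using T finB0 by simp
          ultimately show False using cT False by simp
        qed
        thus ?thesis using ck yk by simp
      qed
    qed
  qed
  have "i0 \<in> sdiff S V" using T by simp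
  hence "pos S i0 = conj_elt (pos V i0)" by (auto simp: pos_def sdiff_def)
  hence "?c k0 = p (sdiff V {i0})" using circ_dual(1)[OF VN i0N] k0pos by simp
  moreover have "sdiff V {i0} = X0" by (auto simp: V_def sdiff_def)
  ultimately have eq0: "?c k0 + ereal lam = y k0" using ceq k0pos by (simp add: u_def)
  show ?thesis using VN main eq0 by blast
qed


lemma hard_dir:
  assumes y: "y \<in> cocycles n p" and x: "x \<in> cocycles n (dual_vec n p)"
    and Pv: "is_Pvec n p" and ne: "\<exists>S\<subseteq>{1..n}. p S \<noteq> \<infinity>"
  shows "trop_orth n y x"
proof (rule ccontr)
  assume "\<not> trop_orth n y x"
  hence "\<not> trop_vanish (Jset n) (\<lambda>k. y k + x k)" by (simp add: trop_orth_def)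
  then obtain k0 where k0: "k0 \<in> Jset n" "y k0 + x k0 \<noteq> \<infinity>"
    "\<forall>b\<in>Jset n. b \<noteq> k0 \<longrightarrow> y k0 + x k0 < y b + x b"
    using NV[OF finite_J] by blast
  have xnm: "\<And>k. x k \<noteq> -\<infinity>" using x by (auto simp: cocycles_def tvec_def)
  have yk0: "y k0 \<noteq> \<infinity>" using k0(2) inf_add[OF xnm] by auto
  obtain V lam where V: "V \<subseteq> {1..n}"
    and ge: "\<forall>k\<in>Jset n. y k \<le> circ_vec n (dual_vec n p) ({1..n} - V) k + ereal lam"
    and eq: "circ_vec n (dual_vec n p) ({1..n} - V) k0 + ereal lam = y k0"
    using gen[OF y Pv ne k0(1) yk0] by blast
  define d where "d = (\<lambda>k. circ_vec n (dual_vec n p) ({1..n} - V) k + ereal lam)"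
  have "d k0 \<noteq> \<infinity>" using eq yk0 by (simp add: d_def)
  hence "k0 \<in> supp n d" using k0(1) by (simp add: supp_def)
  hence "d \<in> circuits n (dual_vec n p)" unfolding circuits_def d_def
    by (intro CollectI exI[of _ "{1..n} - V"] exI[of _ lam]) auto
  hence o: "trop_vanish (Jset n) (\<lambda>k. x k + d k)" using x by (simp add: cocycles_def trop_orth_def)
  have "\<not> trop_vanish (Jset n) (\<lambda>k. x k + d k)"
  proof (rule UM[OF k0(1)])
    have e0: "x k0 + d k0 = y k0 + x k0" using eq by (simp add: d_def add.commute)
    show "x k0 + d k0 \<noteq> \<infinity>" using e0 k0(2) by simp
    show "\<forall>b\<in>Jset n. b \<noteq> k0 \<longrightarrow> x k0 + d k0 < x b + d b"
    proof (intro ballI impI)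
      fix b assume b: "b \<in> Jset n" "b \<noteq> k0"
      have "y b + x b \<le> d b + x b" using ge b(1) by (intro add_mono) (auto simp: d_def)
      moreover have "y k0 + x k0 < y b + x b" using k0(3) b by blast
      ultimately have "y k0 + x k0 < d b + x b" by (meson less_le_trans)
      thus "x k0 + d k0 < x b + d b" using e0 by (simp add: add.commute)
    qed
  qed
  thus False using o by simp
qed

theorem corollary6p10:
  fixes n :: nat and p :: "nat set \<Rightarrow> ereal"
  assumes "tropical_wick n p"
    and "\<exists>S\<subseteq>{1..n}. p S \<noteq> \<infinity>"
  shows "cocycles n (dual_vec n p) = {x \<in> trop_perp n (cocycles n p). admissible_vec n x}"
proof
  have Pv: "is_Pvec n p" using assms(1) by (simp add: tropical_wick_def)
  show "cocycles n (dual_vec n p) \<subseteq> {x \<in> trop_perp n (cocycles n p). admissible_vec n x}"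
  proof
    fix x assume x: "x \<in> cocycles n (dual_vec n p)"
    have "\<forall>y\<in>cocycles n p. trop_orth n y x" using hard_dir[OF _ x Pv assms(2)] by blast
    thus "x \<in> {x \<in> trop_perp n (cocycles n p). admissible_vec n x}"
      using x by (simp add: trop_perp_def cocycles_def)
  qed
  show "{x \<in> trop_perp n (cocycles n p). admissible_vec n x} \<subseteq> cocycles n (dual_vec n p)"
    using sup_dir[OF assms(1)] by blast
qed

end
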